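(* Let $X$ be a topological space with topology $\mathcal T_X$. If there exists a base $\mathcal B$ of $X$ such that the family $\{\mathcal P\in[\mathcal B]^{\le\omega}:\mathcal P\subset_!\mathcal B\}$ contains a club, then the family $\{\mathcal P\in[\mathcal T_X]^{\le\omega}:\mathcal P\subset_!\mathcal T_X\}$ contains a club as well (i.e. $X$ is very I-favorable).
   Context: For a family $\mathcal P$ of open subsets of $X$ contained in a family $\mathcal Q$ of open subsets of $X$, write $\mathcal P\subset_!\mathcal Q$ if for every subfamily $\mathcal S\subset\mathcal P$ and every point $x\notin\operatorname{cl}_X\bigcup\mathcal S$ there exists $W\in\mathcal P$ with $x\in W$ and $W\cap\bigcup\mathcal S=\emptyset$. $[\mathcal Q]^{\le\omega}$ denotes the set of all countable subfamilies of $\mathcal Q$. A family $\mathcal C\subset[\mathcal Q]^{\le\omega}$ is a club if (i) for every increasing sequence $C_1\subset C_2\subset\cdots$ of members of $\mathcal C$, $\bigcup_nC_n\in\mathcal C$, and (ii) every $B\in[\mathcal Q]^{\le\omega}$ is contained in some $C\in\mathcal C$. A space $X$ is very I-favorable if $\{\mathcal P\in[\mathcal T_X]^{\le\omega}:\mathcal P\subset_!\mathcal T_X\}$ contains a club. *)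

theory Defs
  imports "HOL-Analysis.Analysis"
begin

definition opens :: "'a topology \<Rightarrow> 'a set set" where
  "opens X = {U. openin X U}"

definition is_base :: "'a topology \<Rightarrow> 'a set set \<Rightarrow> bool" where
  "is_base X B \<longleftrightarrow> B \<subseteq> opens X \<and>
     (\<forall>U. openin X U \<longrightarrow> (\<exists>S\<subseteq>B. \<Union>S = U))"

definition subset_bang :: "'a topology \<Rightarrow> 'a set set \<Rightarrow> 'a set set \<Rightarrow> bool" where
  "subset_bang X P Q \<longleftrightarrow> P \<subseteq> Q \<and> Q \<subseteq> opens X \<and>
     (\<forall>S\<subseteq>P. \<forall>x\<in>topspace X. x \<notin> X closure_of (\<Union>S) \<longrightarrow>
        (\<exists>W\<in>P. x \<in> W \<and> W \<inter> \<Union>S = {}))"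

definition countable_subfamilies :: "'b set \<Rightarrow> 'b set set" where
  "countable_subfamilies Q = {P. P \<subseteq> Q \<and> countable P}"

definition is_club :: "'b set \<Rightarrow> 'b set set \<Rightarrow> bool" where
  "is_club Q C \<longleftrightarrow> C \<subseteq> countable_subfamilies Q \<and>
     (\<forall>F :: nat \<Rightarrow> 'b set. (\<forall>n. F n \<in> C) \<and> (\<forall>n. F n \<subseteq> F (Suc n)) \<longrightarrow> (\<Union>n. F n) \<in> C) \<and>
     (\<forall>B \<in> countable_subfamilies Q. \<exists>D\<in>C. B \<subseteq> D)"

definition contains_club :: "'b set \<Rightarrow> 'b set set \<Rightarrow> bool" where
  "contains_club Q A \<longleftrightarrow> (\<exists>C. is_club Q C \<and> C \<subseteq> A)"

definition very_I_favorable :: "'a topology \<Rightarrow> bool" where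
  "very_I_favorable X \<longleftrightarrow>
     contains_club (opens X) {P \<in> countable_subfamilies (opens X). subset_bang X P (opens X)}"

end

theory Submission
  imports Defs
begin

lemma sbI:
  assumes "P \<subseteq> Q" "Q \<subseteq> opens X"
    and "\<And>S x. S \<subseteq> P \<Longrightarrow> x\<in>topspace X \<Longrightarrow> x \<notin> X closure_of \<Union>S \<Longrightarrow> \<exists>W\<in>P. x\<in>W \<and> W\<inter>\<Union>S={}"
  shows "subset_bang X P Q"
  using assms unfolding subset_bang_def by blast

lemma sbD:
  assumes "subset_bang X P Q" "S \<subseteq> P" "x \<in> topspace X" "x \<notin> X closure_of \<Union>S"
  shows "\<exists>W\<in>P. x\<in>W \<and> W\<inter>\<Union>S={}"
  using assms unfolding subset_bang_def by blast

theorem proposition2p7: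
  fixes X :: "'a topology" and B :: "'a set set"
  assumes "is_base X B"
    and "contains_club B {P \<in> countable_subfamilies B. subset_bang X P B}"
  shows "very_I_favorable X"
proof -
  from assms(2) obtain C where club: "is_club B C"
    and CA: "C \<subseteq> {P \<in> countable_subfamilies B. subset_bang X P B}"
    unfolding contains_club_def by blast
  have Bop: "B \<subseteq> opens X" using assms(1) unfolding is_base_def by (rule conjunct1)
  have CB: "\<And>P. P \<in> C \<Longrightarrow> P \<subseteq> B \<and> countable P"
    using CA unfolding countable_subfamilies_def by blast
  have Cchain: "\<And>F. (\<forall>n. F n \<in> C) \<Longrightarrow> (\<forall>n. F n \<subseteq> F (Suc n)) \<Longrightarrow> (\<Union>n. F n) \<in> C"
    using club unfolding is_club_def by blast
  have witex: "\<exists>V. V\<in>B \<and> V\<noteq>{} \<and> V \<subseteq> W\<inter>U"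
    if wo: "W\<in>opens X" "U\<in>opens X" "W\<inter>U\<noteq>{}" for W U
  proof -
    have o: "openin X (W \<inter> U)" using wo unfolding opens_def by auto
    have h: "\<forall>U. openin X U \<longrightarrow> (\<exists>S\<subseteq>B. \<Union>S = U)" using assms(1) unfolding is_base_def by (rule conjunct2)
    from h have "openin X (W \<inter> U) \<longrightarrow> (\<exists>S\<subseteq>B. \<Union>S = W \<inter> U)" by (rule spec)
    from this o have "\<exists>S\<subseteq>B. \<Union>S = W \<inter> U" by (rule mp)
    then obtain S where S: "S \<subseteq> B" "\<Union>S = W \<inter> U" by (elim exE conjE)
    obtain y where "y \<in> \<Union>S" using S(2) wo(3) by blast
    then obtain V where V: "V \<in> S" "y \<in> V" by blast
    have "V \<subseteq> W \<inter> U" using V(1) S(2) by blast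
    then show ?thesis using V S(1) by blast
  qed
  define wit where "wit W U = (SOME V. V\<in>B \<and> V\<noteq>{} \<and> V \<subseteq> W\<inter>U)" for W U
  have wit: "wit W U \<in> B \<and> wit W U \<noteq> {} \<and> wit W U \<subseteq> W\<inter>U"
    if "W\<in>opens X" "U\<in>opens X" "W\<inter>U\<noteq>{}" for W U
    unfolding wit_def using someI_ex[OF witex[OF that]] .
  have pickex: "\<exists>P. P \<in> C \<and> R \<inter> B \<subseteq> P" if "countable R" for R
  proof -
    have "R \<inter> B \<in> countable_subfamilies B" using that unfolding countable_subfamilies_def by auto
    then show ?thesis using club unfolding is_club_def by blast
  qed
  define pick where "pick R = (SOME P. P \<in> C \<and> R \<inter> B \<subseteq> P)" for R
  have pick: "pick R \<in> C \<and> R \<inter> B \<subseteq> pick R" if "countable R" for R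
    unfolding pick_def using someI_ex[OF pickex[OF that]] .
  define Wt where "Wt R = (\<lambda>(W,U). wit W U) ` {p \<in> R \<times> R. fst p \<in> B \<and> fst p \<inter> snd p \<noteq> {}}" for R
  define step where "step R = R \<union> pick R \<union> Wt R" for R
  define D where "D = {Q \<in> countable_subfamilies (opens X). Q \<inter> B \<in> C \<and>
     (\<forall>W\<in>Q\<inter>B. \<forall>U\<in>Q. W\<inter>U\<noteq>{} \<longrightarrow> (\<exists>V\<in>Q\<inter>B. V\<noteq>{} \<and> V\<subseteq>W\<inter>U))}"
  have Wt: "countable (Wt R) \<and> Wt R \<subseteq> B" if "countable R" "R \<subseteq> opens X" for R
  proof
    have "{p \<in> R \<times> R. fst p \<in> B \<and> fst p \<inter> snd p \<noteq> {}} \<subseteq> R \<times> R" by auto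
    then have "countable {p \<in> R \<times> R. fst p \<in> B \<and> fst p \<inter> snd p \<noteq> {}}"
      using countable_subset[OF _ countable_SIGMA[OF that(1) that(1)]] by blast
    then show "countable (Wt R)" unfolding Wt_def by (rule countable_image)
    show "Wt R \<subseteq> B"
    proof
      fix v assume "v \<in> Wt R"
      then obtain p where p: "p \<in> R \<times> R" "fst p \<inter> snd p \<noteq> {}" "v = wit (fst p) (snd p)"
        unfolding Wt_def by (auto simp: case_prod_beta)
      have "fst p \<in> opens X" "snd p \<in> opens X" using p(1) that(2) by auto
      then show "v \<in> B" using wit p(2,3) by blast
    qed
  qed
  have stepgood: "countable (step R) \<and> step R \<subseteq> opens X" if "countable R" "R \<subseteq> opens X" for R
  proof -
    have pc: "pick R \<in> C" using pick[OF that(1)] by (rule conjunct1)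
    have p1: "pick R \<subseteq> B" "countable (pick R)" using CB[OF pc] by auto
    have w1: "Wt R \<subseteq> B" "countable (Wt R)" using Wt[OF that] by auto
    have "countable (step R)" unfolding step_def using that(1) p1(2) w1(2) by simp
    moreover have "step R \<subseteq> opens X" unfolding step_def using that(2) p1(1) w1(1) Bop by blast
    ultimately show ?thesis by blast
  qed
  have club2: "is_club (opens X) D"
    unfolding is_club_def
  proof (intro conjI allI impI ballI)
    show "D \<subseteq> countable_subfamilies (opens X)" unfolding D_def by blast
  next
    fix F :: "nat \<Rightarrow> 'a set set"
    assume a: "(\<forall>n. F n \<in> D) \<and> (\<forall>n. F n \<subseteq> F (Suc n))"
    have inc: "incseq F" using a by (intro incseq_SucI) auto
    have "(\<Union>n. F n) \<in> countable_subfamilies (opens X)"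
      using a unfolding D_def countable_subfamilies_def by auto
    moreover have "(\<Union>n. F n) \<inter> B = (\<Union>n. F n \<inter> B)" by auto
    moreover have "(\<Union>n. F n \<inter> B) \<in> C"
      using a by (intro Cchain) (auto simp: D_def)
    moreover have "\<exists>V\<in>(\<Union>n. F n)\<inter>B. V\<noteq>{} \<and> V\<subseteq>W\<inter>U"
      if hh: "W\<in>(\<Union>n. F n)\<inter>B" "U\<in>(\<Union>n. F n)" "W\<inter>U\<noteq>{}" for W U
    proof -
      obtain m k where "W \<in> F m" "W \<in> B" "U \<in> F k" using hh by auto
      then have "W \<in> F (max m k)" "U \<in> F (max m k)" using incseqD[OF inc] by (meson max.cobounded1 max.cobounded2 subsetD)+
      then obtain V where "V \<in> F (max m k) \<inter> B" "V\<noteq>{}" "V\<subseteq>W\<inter>U"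
        using a \<open>W\<in>B\<close> hh(3) unfolding D_def by blast
      then show ?thesis by blast
    qed
    ultimately show "(\<Union>n. F n) \<in> D" unfolding D_def by auto
  next
    fix A assume A: "A \<in> countable_subfamilies (opens X)"
    define seq where "seq n = (step ^^ n) A" for n
    have sg: "countable (seq n) \<and> seq n \<subseteq> opens X" for n
    proof (induction n)
      case 0 then show ?case using A unfolding seq_def countable_subfamilies_def by auto
    next
      case (Suc n) then show ?case using stepgood unfolding seq_def by auto
    qed
    have seqS: "seq (Suc n) = step (seq n)" for n unfolding seq_def by simp
    define P where "P n = pick (seq n)" for n
    have P1: "P n \<in> C" "seq n \<inter> B \<subseteq> P n" for n using pick sg unfolding P_def by auto
    have P2: "P n \<subseteq> seq (Suc n) \<inter> B" for n using P1 CB unfolding seqS step_def P_def by blast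
    have sinc: "seq n \<subseteq> seq (Suc n)" for n unfolding seqS step_def by blast
    then have inc: "incseq seq" by (intro incseq_SucI) auto
    let ?Q = "\<Union>n. seq n"
    have eq: "?Q \<inter> B = (\<Union>n. P n)" using P1(2) P2 by blast
    have "?Q \<inter> B \<in> C" unfolding eq
      using P1(1) P1(2) P2 by (intro Cchain) blast+
    moreover have "?Q \<in> countable_subfamilies (opens X)"
      using sg unfolding countable_subfamilies_def by auto
    moreover have "\<exists>V\<in>?Q\<inter>B. V\<noteq>{} \<and> V\<subseteq>W\<inter>U"
      if hh: "W\<in>?Q\<inter>B" "U\<in>?Q" "W\<inter>U\<noteq>{}" for W U
    proof -
      obtain m k where "W \<in> seq m" "W \<in> B" "U \<in> seq k" using hh by auto
      then have m: "W \<in> seq (max m k)" "U \<in> seq (max m k)" using incseqD[OF inc] by (meson max.cobounded1 max.cobounded2 subsetD)+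
      let ?n = "max m k"
      have "wit W U \<in> Wt (seq ?n)" unfolding Wt_def using m \<open>W\<in>B\<close> hh(3)
        by (intro image_eqI[where x="(W,U)"]) auto
      then have "wit W U \<in> seq (Suc ?n)" unfolding seqS step_def by blast
      moreover have "wit W U \<in> B \<and> wit W U \<noteq> {} \<and> wit W U \<subseteq> W\<inter>U"
        using wit m sg hh(3) by blast
      ultimately show ?thesis by blast
    qed
    ultimately have "?Q \<in> D" unfolding D_def by blast
    moreover have "A \<subseteq> ?Q" using seq_def by (metis UN_upper UNIV_I funpow_0)
    ultimately show "\<exists>D'\<in>D. A \<subseteq> D'" by blast
  qed
  have sub: "D \<subseteq> {P \<in> countable_subfamilies (opens X). subset_bang X P (opens X)}"
  proof
    fix Q assume Q: "Q \<in> D"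
    have Dm: "Q \<in> countable_subfamilies (opens X) \<and> Q \<inter> B \<in> C \<and>
     (\<forall>W\<in>Q\<inter>B. \<forall>U\<in>Q. W\<inter>U\<noteq>{} \<longrightarrow> (\<exists>V\<in>Q\<inter>B. V\<noteq>{} \<and> V\<subseteq>W\<inter>U))"
      using Q unfolding D_def by (rule CollectD)
    have Qcs: "Q \<in> countable_subfamilies (opens X)" using Dm by (rule conjunct1)
    have QC: "Q \<inter> B \<in> C" using Dm by simp
    have Qop: "Q \<subseteq> opens X" using Qcs unfolding countable_subfamilies_def by simp
    have cl: "\<exists>V\<in>Q\<inter>B. V\<noteq>{} \<and> V\<subseteq>W\<inter>U" if "W\<in>Q\<inter>B" "U\<in>Q" "W\<inter>U\<noteq>{}" for W U
      using Dm that by simp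
    have sb: "subset_bang X (Q \<inter> B) B" using CA QC by blast
    have "subset_bang X Q (opens X)"
    proof (rule sbI[OF Qop order_refl])
      fix S x assume S: "S \<subseteq> Q" and x: "x \<in> topspace X" and nx: "x \<notin> X closure_of \<Union>S"
      define S' where "S' = {V \<in> Q \<inter> B. \<exists>U\<in>S. V \<subseteq> U}"
      have "\<Union>S' \<subseteq> \<Union>S" unfolding S'_def by blast
      then have "x \<notin> X closure_of \<Union>S'" using nx closure_of_mono by blast
      moreover have "S' \<subseteq> Q \<inter> B" unfolding S'_def by blast
      ultimately obtain W where W: "W \<in> Q \<inter> B" "x \<in> W" "W \<inter> \<Union>S' = {}"
        using sbD[OF sb _ x] by blast
      have "W \<inter> \<Union>S = {}"
      proof (rule ccontr)
        assume "W \<inter> \<Union>S \<noteq> {}"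
        then obtain U where U: "U \<in> S" "W \<inter> U \<noteq> {}" by blast
        have "U \<in> Q" using U(1) S by blast
        then obtain V where V: "V\<in>Q\<inter>B" "V\<noteq>{}" "V\<subseteq>W\<inter>U" using cl[OF W(1) _ U(2)] by blast
        then have "V \<in> S'" unfolding S'_def using U(1) by blast
        then have "V \<subseteq> \<Union>S'" by blast
        then show False using W(3) V(2) V(3) by blast
      qed
      then show "\<exists>W\<in>Q. x \<in> W \<and> W \<inter> \<Union>S = {}" using W by blast
    qed
    then show "Q \<in> {P \<in> countable_subfamilies (opens X). subset_bang X P (opens X)}"
      using Qcs by blast
  qed
  show ?thesis unfolding very_I_favorable_def contains_club_def by (intro exI[of _ D] conjI club2 sub)
qed

end
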